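(* Assume Dickson's conjecture. Then the set \[ \left\{ \frac{\varphi(p+1)}{\varphi(p)} \,:\, p \text{ and } p+2 \text{ are both prime} \right\} \] is dense in $\left[0,\tfrac{1}{3}\right]$.
   Context: $\varphi$ denotes Euler's totient function. Dickson's conjecture is the following assertion: if $f_1,\dots,f_k \in \mathbb{Z}[t]$ are linear polynomials with positive leading coefficients and the product $f=f_1f_2\cdots f_k$ does not vanish identically modulo any prime (i.e., for every prime $q$ there is an integer $t$ with $q \nmid f(t)$), then there are infinitely many positive integers $t$ for which $f_1(t),\dots,f_k(t)$ are simultaneously prime. *)

theory Defs
  imports "HOL-Analysis.Analysis" "HOL-Number_Theory.Number_Theory"
begin

text \<open>Dickson's conjecture. A linear polynomial f(t) = a*t + b in Z[t] is encoded as the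
pair (a, b). A finite family f_1,...,f_k is a list of such pairs.\<close>

definition dickson_conjecture :: bool where
  "dickson_conjecture \<longleftrightarrow>
     (\<forall>fs :: (int \<times> int) list.
        (\<forall>(a, b) \<in> set fs. a > 0) \<longrightarrow>
        (\<forall>q :: int. prime q \<longrightarrow>
           (\<exists>t :: int. \<not> q dvd (\<Prod>(a, b) \<leftarrow> fs. a * t + b))) \<longrightarrow>
        infinite {t :: int. t > 0 \<and> (\<forall>(a, b) \<in> set fs. prime (a * t + b))})"

end

theory Submission imports Defs begin

definition smooth :: "nat set \<Rightarrow> nat \<Rightarrow> nat set" where
  "smooth P X = {m. m \<in> {1..X} \<and> (\<forall>q. prime q \<longrightarrow> q dvd m \<longrightarrow> q \<in> P)}"

lemma geom_bound:
  assumes "prime (q::nat)"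
  shows "(\<Sum>k\<le>X. (1 / real q) ^ k) \<le> real q / (real q - 1)"
proof -
  have q2: "real q \<ge> 2" using prime_ge_2_nat[OF assms] by simp
  have lt: "norm (1 / real q) < 1" using q2 by simp
  have "(\<Sum>k\<le>X. (1 / real q) ^ k) = (\<Sum>k<Suc X. (1 / real q) ^ k)"
    by (simp add: lessThan_Suc_atMost)
  also have "\<dots> \<le> (\<Sum>k. (1 / real q) ^ k)"
    by (rule sum_le_suminf) (use lt summable_geometric in auto)
  also have "\<dots> = 1 / (1 - 1 / real q)" by (rule suminf_geometric[OF lt])
  also have "\<dots> = real q / (real q - 1)" using q2 by (simp add: field_simps)
  finally show ?thesis .
qed

lemma smooth_sum:
  assumes "finite P" "\<forall>q\<in>P. prime q"
  shows "(\<Sum>m\<in>smooth P X. 1 / real m) \<le> (\<Prod>q\<in>P. real q / (real q - 1))"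
  using assms
proof (induction P rule: finite_induct)
  case empty
  have "smooth {} X \<subseteq> {1}"
  proof
    fix m assume "m \<in> smooth {} X"
    hence "m \<ge> 1" "\<forall>q. prime q \<longrightarrow> \<not> q dvd m" by (auto simp: smooth_def)
    thus "m \<in> {1}" using prime_factor_nat[of m] by auto
  qed
  hence "(\<Sum>m\<in>smooth {} X. 1 / real m) \<le> (\<Sum>m\<in>{1}. 1 / real m)"
    by (intro sum_mono2) auto
  thus ?case by simp
next
  case (insert q P)
  have qp: "prime q" using insert by auto
  have fin: "finite (smooth P X)" unfolding smooth_def by auto
  let ?f = "\<lambda>(k, m'). q ^ k * m'"
  have sub: "smooth (insert q P) X \<subseteq> ?f ` ({..X} \<times> smooth P X)"
  proof
    fix m assume m: "m \<in> smooth (insert q P) X"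
    hence m1: "m \<ge> 1" "m \<le> X" and mq: "\<forall>r. prime r \<longrightarrow> r dvd m \<longrightarrow> r \<in> insert q P"
      by (auto simp: smooth_def)
    obtain y where y: "m = q ^ multiplicity q m * y" "\<not> q dvd y"
      using multiplicity_decompose'[of m q] m1 qp by (metis not_one_le_zero not_prime_unit)
    define k where "k = multiplicity q m"
    have y0: "y \<ge> 1" using y m1 by (cases y) auto
    have "k < 2 ^ k" by (rule less_exp)
    also have "2 ^ k \<le> q ^ k" using prime_ge_2_nat[OF qp] by (simp add: power_mono)
    also have "q ^ k \<le> m" using y y0 k_def by (metis dvd_imp_le dvd_triv_left m1(1) less_le_trans zero_less_one)
    finally have kX: "k \<le> X" using m1 by simp
    have yle: "y \<le> m" using y y0 m1 by (metis dvd_imp_le dvd_triv_right less_le_trans zero_less_one)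
    have "y \<in> smooth P X"
      unfolding smooth_def
    proof (intro CollectI conjI allI impI)
      show "y \<in> {1..X}" using y0 yle m1 by auto
    next
      fix r assume r: "prime r" "r dvd y"
      hence "r dvd m" using y by (metis dvd_mult2 mult.commute)
      hence "r \<in> insert q P" using mq r by blast
      moreover have "r \<noteq> q" using r y by auto
      ultimately show "r \<in> P" by simp
    qed
    thus "m \<in> ?f ` ({..X} \<times> smooth P X)" using kX y k_def by force
  qed
  have "(\<Sum>m\<in>smooth (insert q P) X. 1 / real m) \<le> (\<Sum>m\<in>?f ` ({..X} \<times> smooth P X). 1 / real m)"
    by (intro sum_mono2 sub finite_imageI) (use fin in auto)
  also have "\<dots> \<le> (\<Sum>km\<in>{..X} \<times> smooth P X. ((\<lambda>m. 1 / real m) \<circ> ?f) km)"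
    by (rule sum_image_le) (use fin in auto)
  also have "\<dots> = (\<Sum>km\<in>{..X} \<times> smooth P X. (1 / real q) ^ fst km * (1 / real (snd km)))"
    by (intro sum.cong) (auto simp: power_one_over)
  also have "\<dots> = (\<Sum>k\<le>X. (1 / real q) ^ k) * (\<Sum>m\<in>smooth P X. 1 / real m)"
    by (simp add: sum_product sum.cartesian_product split_beta)
  also have "\<dots> \<le> (real q / (real q - 1)) * (\<Prod>q\<in>P. real q / (real q - 1))"
    using prime_ge_2_nat[OF qp] by (intro mult_mono geom_bound qp) (use insert in \<open>auto intro: sum_nonneg\<close>)
  also have "\<dots> = (\<Prod>q\<in>insert q P. real q / (real q - 1))" using insert by simp
  finally show ?case .
qed


lemma harm_le_totient:
  assumes N: "N > 0" and cond: "\<And>m q. m \<in> {1..X} \<Longrightarrow> prime q \<Longrightarrow> q dvd m \<Longrightarrow> q dvd N"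
  shows "(harm X :: real) \<le> real N / real (totient N)"
proof -
  have "smooth (prime_factors N) X = {1..X}"
    unfolding smooth_def using cond N by (auto simp: in_prime_factors_iff)
  hence "(harm X :: real) = (\<Sum>m\<in>smooth (prime_factors N) X. 1 / real m)"
    by (simp add: harm_def inverse_eq_divide)
  also have "\<dots> \<le> (\<Prod>q\<in>prime_factors N. real q / (real q - 1))"
    by (rule smooth_sum) auto
  also have "\<dots> = 1 / (\<Prod>q\<in>prime_factors N. 1 - 1 / real q)"
  proof -
    have "(\<Prod>q\<in>prime_factors N. real q / (real q - 1)) = (\<Prod>q\<in>prime_factors N. 1 / (1 - 1 / real q))"
    proof (intro prod.cong refl)
      fix q assume "q \<in> prime_factors N"
      hence "real q \<ge> 2" using prime_ge_2_nat by (auto simp: in_prime_factors_iff)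
      thus "real q / (real q - 1) = 1 / (1 - 1 / real q)" by (simp add: field_simps)
    qed
    also have "\<dots> = 1 / (\<Prod>q\<in>prime_factors N. 1 - 1 / real q)"
      by (simp add: prod_dividef)
    finally show ?thesis .
  qed
  also have "\<dots> = real N / real (totient N)"
    using N by (simp add: totient_formula2)
  finally show ?thesis .
qed

lemma totient_mult_ge: "totient a * totient b \<le> totient (a * b)"
proof (cases "a = 0 \<or> b = 0")
  case True thus ?thesis by auto
next
  case False
  hence g: "gcd a b > 0" by simp
  have "totient a * totient b * totient (gcd a b) \<le> totient a * totient b * gcd a b"
    by (simp add: totient_le)
  also have "\<dots> = totient (a * b) * totient (gcd a b)" by (simp add: totient_gcd)
  finally have "totient a * totient b * totient (gcd a b) \<le> totient (a * b) * totient (gcd a b)" .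
  moreover have "totient (gcd a b) > 0" using g by simp
  ultimately show ?thesis by (rule mult_right_le_imp_le)
qed

primrec Ms :: "nat \<Rightarrow> nat \<Rightarrow> nat" where
  "Ms K 0 = 6"
| "Ms K (Suc n) = (if K < Suc n \<and> prime (Suc n) then Ms K n * Suc n else Ms K n)"

lemma Ms_Suc_prime: "K < Suc n \<Longrightarrow> prime (Suc n) \<Longrightarrow> Ms K (Suc n) = Ms K n * Suc n"
  by simp

lemma Ms_Suc_np: assumes "\<not> (K < Suc n \<and> prime (Suc n))" shows "Ms K (Suc n) = Ms K n"
  using assms by (simp only: Ms.simps if_False)

lemma Ms_pos: "Ms K n > 0" and Ms_6: "6 dvd Ms K n"
  by (induction n) auto

lemma Ms_primes: "prime q \<Longrightarrow> q dvd Ms K n \<Longrightarrow> q \<le> max 3 n"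
proof (induction n)
  case 0
  hence "q dvd 2 * 3" by simp
  hence "q dvd 2 \<or> q dvd 3" using 0 prime_dvd_mult_iff by blast
  thus ?case by (auto dest: dvd_imp_le)
next
  case (Suc n)
  show ?case
  proof (cases "K < Suc n \<and> prime (Suc n)")
    case True
    have "q dvd Ms K n * Suc n" using Suc.prems True Ms_Suc_prime by metis
    hence "q dvd Ms K n \<or> q dvd Suc n" using Suc.prems(1) prime_dvd_mult_iff by blast
    moreover have "q dvd Ms K n \<Longrightarrow> q \<le> max 3 (Suc n)" using Suc by auto
    moreover have "q dvd Suc n \<Longrightarrow> q \<le> max 3 (Suc n)" using dvd_imp_le[of q "Suc n"] by auto
    ultimately show ?thesis by blast
  next
    case False thus ?thesis using Suc by auto
  qed
qed

lemma Ms_has: "prime r \<Longrightarrow> K < r \<Longrightarrow> r \<le> n \<Longrightarrow> r dvd Ms K n"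
proof (induction n)
  case (Suc n)
  show ?case
  proof (cases "r = Suc n")
    case True thus ?thesis using Suc Ms_Suc_prime by (metis dvd_triv_right)
  next
    case False thus ?thesis using Suc by auto
  qed
qed auto

definition vv :: "nat \<Rightarrow> nat \<Rightarrow> real" where
  "vv K n = real (totient (Ms K n)) / real (Ms K n)"

lemma vv_0: "vv K 0 = 1/3" by (simp add: vv_def)

lemma vv_bounds: "0 \<le> vv K n" "vv K n \<le> 1"
  unfolding vv_def using Ms_pos[of K n] totient_le[of "Ms K n"] by (auto simp: field_simps)

lemma vv_step:
  assumes "K \<ge> 3"
  shows "vv K (Suc n) = vv K n \<or> (K < Suc n \<and> vv K (Suc n) = vv K n * (real n / real (Suc n)))"
proof (cases "K < Suc n \<and> prime (Suc n)")
  case True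
  have "\<not> Suc n dvd Ms K n"
  proof
    assume "Suc n dvd Ms K n"
    hence "Suc n \<le> max 3 n" using Ms_primes True by blast
    thus False using True assms by auto
  qed
  hence cop: "coprime (Ms K n) (Suc n)" using True prime_imp_coprime coprime_commute by blast
  have eq: "Ms K (Suc n) = Ms K n * Suc n" using True Ms_Suc_prime by blast
  have "totient (Ms K (Suc n)) = totient (Ms K n) * n"
    unfolding eq using True totient_mult_coprime[OF cop] totient_prime[of "Suc n"] by simp
  hence "vv K (Suc n) = vv K n * (real n / real (Suc n))"
    using Ms_pos[of K n] unfolding vv_def eq by (simp add: field_simps)
  thus ?thesis using True by blast
next
  case False
  thus ?thesis using Ms_Suc_np[OF False] unfolding vv_def by simp
qed

lemma vv_small:
  assumes "K \<ge> 3" "\<delta> > 0"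
  shows "\<exists>n. vv K n < \<delta>"
proof -
  define C where "C = real (fact K) / real (totient (fact K))"
  have C: "C > 0" unfolding C_def by simp
  have "\<forall>\<^sub>F n in sequentially. C / \<delta> + 1 \<le> (harm n :: real)"
    using harm_at_top by (simp add: filterlim_at_top)
  then obtain X where X: "C / \<delta> + 1 \<le> (harm X :: real)" by (auto simp: eventually_sequentially)
  define N where "N = Ms K X * fact K"
  have N: "N > 0" unfolding N_def using Ms_pos by simp
  have "(harm X :: real) \<le> real N / real (totient N)"
  proof (rule harm_le_totient[OF N])
    fix m q assume m: "m \<in> {1..X}" and q: "prime q" "q dvd m"
    have qX: "q \<le> X" using dvd_imp_le[of q m] m q(2) by auto
    show "q dvd N"
    proof (cases "q \<le> K")
      case True
      hence "q dvd fact K" using q prime_ge_1_nat by (intro dvd_fact) auto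
      thus ?thesis unfolding N_def by simp
    next
      case False
      hence "q dvd Ms K X" using Ms_has q qX by simp
      thus ?thesis unfolding N_def by simp
    qed
  qed
  also have "\<dots> \<le> real N / (real (totient (Ms K X)) * real (totient (fact K)))"
  proof -
    have "real (totient (Ms K X)) * real (totient (fact K)) \<le> real (totient N)"
      unfolding N_def using totient_mult_ge[of "Ms K X" "fact K"] by (simp flip: of_nat_mult)
    moreover have "real (totient (Ms K X)) * real (totient (fact K)) > 0"
      using Ms_pos by simp
    moreover have "real (totient N) > 0" using N by simp
    ultimately show ?thesis by (intro divide_left_mono) auto
  qed
  also have "\<dots> = C / vv K X"
    unfolding C_def vv_def N_def using Ms_pos[of K X] by (simp add: field_simps)
  finally have h: "harm X \<le> C / vv K X" .
  have vpos: "vv K X > 0" unfolding vv_def using Ms_pos by simp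
  have lt: "C / \<delta> < C / vv K X" using X h by linarith
  have "vv K X < \<delta>"
  proof (rule ccontr)
    assume "\<not> vv K X < \<delta>"
    hence "\<delta> \<le> vv K X" by simp
    hence "C / vv K X \<le> C / \<delta>" using C assms(2) by (intro divide_left_mono) auto
    thus False using lt by simp
  qed
  thus ?thesis by blast
qed


lemma real_bound:
  fixes a m s :: real
  assumes "m \<ge> 6" "s \<ge> m" "0 \<le> a" "a \<le> m"
  shows "\<bar>a * (s - 1) / (m * s - 2) - a / m\<bar> \<le> 1 / s"
proof -
  have ms: "m * s - 2 > 0" proof -
    have "6 * 6 \<le> m * s" using assms by (intro mult_mono) auto
    thus ?thesis by linarith
  qed
  have m0: "m > 0" using assms by simp
  have "a * (s - 1) / (m * s - 2) - a / m = - (a * (m - 2)) / (m * (m * s - 2))"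
    using ms m0 by (simp add: field_simps)
  moreover have "(a * (m - 2)) / (m * (m * s - 2)) \<ge> 0"
    using ms m0 assms by (intro divide_nonneg_pos mult_nonneg_nonneg mult_pos_pos) auto
  ultimately have "\<bar>a * (s - 1) / (m * s - 2) - a / m\<bar> = (a * (m - 2)) / (m * (m * s - 2))"
    by (metis abs_minus_cancel abs_of_nonneg minus_divide_left)
  also have "\<dots> \<le> (m * (m - 2)) / (m * (m * s - 2))"
    using ms m0 assms by (intro divide_right_mono mult_right_mono) auto
  also have "\<dots> = (m - 2) / (m * s - 2)" using m0 by simp
  also have "\<dots> \<le> 1 / s"
    using ms assms by (simp add: field_simps)
  finally show ?thesis .
qed

lemma dickson_M:
  assumes dc: "dickson_conjecture" and M: "M > 0" "6 dvd M" and d: "\<delta> > 0"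
  shows "\<exists>p. prime p \<and> prime (p + 2) \<and>
    \<bar>real (totient (p + 1)) / real (totient p) - real (totient M) / real M\<bar> < \<delta>"
proof -
  let ?fs = "[(1::int, 0::int), (int M, -1), (int M, 1)]"
  have h1: "\<forall>(a, b)\<in>set ?fs. a > 0" using M by auto
  have h2: "\<forall>q::int. prime q \<longrightarrow> (\<exists>t. \<not> q dvd (\<Prod>(a, b)\<leftarrow>?fs. a * t + b))"
  proof (intro allI impI)
    fix q :: int assume q: "prime q"
    show "\<exists>t. \<not> q dvd (\<Prod>(a, b)\<leftarrow>?fs. a * t + b)"
    proof (rule ccontr)
      assume "\<not> ?thesis"
      hence a1: "q dvd (\<Prod>(a, b)\<leftarrow>?fs. a * 1 + b)" and a2: "q dvd (\<Prod>(a, b)\<leftarrow>?fs. a * 2 + b)"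
        by blast+
      have d1: "q dvd (int M - 1) * (int M + 1)" using a1 by simp
      have d2: "q dvd 2 * ((2 * int M - 1) * (2 * int M + 1))" using a2 by (simp add: algebra_simps)
      have e: "6 = 2 * ((2 * int M - 1) * (2 * int M + 1)) - 8 * ((int M - 1) * (int M + 1))"
        by (simp add: algebra_simps)
      have "q dvd 6" unfolding e by (rule dvd_diff[OF d2 dvd_mult[OF d1]])
      moreover have "6 dvd int M" using M(2) by (metis int_dvd_int_iff of_nat_numeral)
      ultimately have "q dvd int M" by (rule dvd_trans)
      hence "q dvd int M * int M" by simp
      moreover have "1 = int M * int M - (int M - 1) * (int M + 1)" by (simp add: algebra_simps)
      ultimately have "q dvd 1" using d1 by (metis dvd_diff)
      thus False using q not_prime_unit by blast
    qed
  qed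
  have inf: "infinite {t::int. t > 0 \<and> (\<forall>(a, b)\<in>set ?fs. prime (a * t + b))}"
    using dc h1 h2 unfolding dickson_conjecture_def by blast
  obtain B :: nat where B: "1 / \<delta> < real B" using reals_Archimedean2 by blast
  define T where "T = int (max M B)"
  have fT: "finite {0..T}" by simp
  have "\<not> {t::int. t > 0 \<and> (\<forall>(a, b)\<in>set ?fs. prime (a * t + b))} \<subseteq> {0..T}"
    using inf finite_subset[OF _ fT] by blast
  then obtain t :: int where tin: "t \<in> {t::int. t > 0 \<and> (\<forall>(a, b)\<in>set ?fs. prime (a * t + b))}"
    and tout: "t \<notin> {0..T}" by blast
  have t0: "t > 0" and tp: "\<forall>(a, b)\<in>set ?fs. prime (a * t + b)" using tin by auto
  have "t > T" using t0 tout by auto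
  moreover have "prime t" using tp by simp
  moreover have "prime (int M * t - 1)" using tp by simp
  moreover have "prime (int M * t + 1)" using tp by simp
  ultimately have t: "t > T" "prime t" "prime (int M * t - 1)" "prime (int M * t + 1)" by blast+
  define s where "s = nat t"
  have ts: "t = int s" using t T_def unfolding s_def by simp
  have sM: "s > M" "real s > B" using t T_def ts by auto
  have s1: "M * s \<ge> 1" using sM M by (simp add: Suc_le_eq)
  define p where "p = M * s - 1"
  have ip: "int p = int M * t - 1" using s1 ts unfolding p_def by (simp add: of_nat_diff)
  have pp: "prime p" using t(3) ip by (metis prime_nat_int_transfer)
  have ip2: "int (p + 2) = int M * t + 1" using ip by simp
  have pp2: "prime (p + 2)" using t(4) ip2 by (metis prime_nat_int_transfer)
  have sp: "prime s" using t(2) ts by simp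
  have p1: "p + 1 = M * s" using s1 unfolding p_def by simp
  have "\<not> s dvd M" using sM M dvd_imp_le by fastforce
  hence cop: "coprime M s" using sp prime_imp_coprime coprime_commute by blast
  have tot1: "totient (p + 1) = totient M * (s - 1)"
    unfolding p1 using totient_mult_coprime[OF cop] totient_prime[OF sp] by simp
  have tot2: "totient p = M * s - 2" using totient_prime[OF pp] unfolding p_def by simp
  have s2: "s \<ge> 2" using prime_ge_2_nat[OF sp] .
  have "1 * s \<le> M * s" using M(1) by (intro mult_le_mono1) simp
  hence Ms2: "M * s \<ge> 2" using s2 by linarith
  have r1: "real (totient (p + 1)) = real (totient M) * (real s - 1)"
    using tot1 s2 by (simp add: of_nat_diff)
  have r2: "real (totient p) = real M * real s - 2"
    using tot2 Ms2 by (simp add: of_nat_diff)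
  have "M \<ge> 6" using dvd_imp_le[OF M(2) M(1)] .
  hence M6: "real M \<ge> 6" by simp
  have "\<bar>real (totient (p + 1)) / real (totient p) - real (totient M) / real M\<bar> \<le> 1 / real s"
    unfolding r1 r2 using M6 sM totient_le[of M] by (intro real_bound) auto
  also have "\<dots> < \<delta>"
  proof -
    have "1 / \<delta> < real s" using B sM by linarith
    moreover have "real s > 0" using s2 by simp
    ultimately show ?thesis using d by (simp add: field_simps)
  qed
  finally show ?thesis using pp pp2 by blast
qed


lemma approx_M:
  assumes x: "0 \<le> x" "x \<le> 1/3" and e: "\<epsilon> > 0"
  shows "\<exists>M>0. 6 dvd M \<and> \<bar>real (totient M) / real M - x\<bar> < \<epsilon>"
proof -
  obtain n0 :: nat where n0: "1 / \<epsilon> < real n0" using reals_Archimedean2 by blast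
  define K where "K = max 3 n0"
  have K3: "K \<ge> 3" unfolding K_def by simp
  have n0p: "real n0 > 0" using n0 e by (smt (verit) divide_pos_pos)
  have "1 / real n0 < \<epsilon>" using n0 n0p e by (simp add: field_simps)
  moreover have "1 / real K \<le> 1 / real n0" unfolding K_def using n0p
    by (intro divide_left_mono) auto
  ultimately have Ke: "1 / real K < \<epsilon>" by linarith
  have ex: "\<exists>n. vv K n < x + \<epsilon>" using vv_small[OF K3] x e by simp
  define n where "n = (LEAST n. vv K n < x + \<epsilon>)"
  have n: "vv K n < x + \<epsilon>" unfolding n_def using LeastI_ex[OF ex] .
  have close: "\<bar>vv K n - x\<bar> < \<epsilon>"
  proof (cases n)
    case 0
    thus ?thesis using n x vv_0[of K] by simp
  next
    case (Suc m)
    have "\<not> vv K m < x + \<epsilon>" using not_less_Least[of m "\<lambda>n. vv K n < x + \<epsilon>"] Suc n_def by simp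
    hence vm: "vv K m \<ge> x + \<epsilon>" by simp
    from vv_step[OF K3, of m] have "K < Suc m \<and> vv K (Suc m) = vv K m * (real m / real (Suc m))"
      using vm n Suc by auto
    hence Km: "K < Suc m" and eq: "vv K (Suc m) = vv K m * (real m / real (Suc m))" by auto
    have "vv K (Suc m) = vv K m - vv K m / real (Suc m)"
      unfolding eq by (simp add: field_simps)
    moreover have "vv K m / real (Suc m) \<le> 1 / real (Suc m)"
      using vv_bounds[of K m] by (intro divide_right_mono) auto
    moreover have "1 / real (Suc m) \<le> 1 / real K"
      using Km K3 by (intro divide_left_mono) auto
    ultimately have "vv K (Suc m) > x" using vm Ke by linarith
    thus ?thesis using n Suc by simp
  qed
  show ?thesis using close Ms_pos[of K n] Ms_6[of K n] unfolding vv_def by blast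
qed

theorem theorem3:
  assumes "dickson_conjecture"
  shows "{0..1/3} \<subseteq> closure {real (totient (p + 1)) / real (totient p) | p :: nat.
                                 prime p \<and> prime (p + 2)}"
proof
  fix x :: real assume "x \<in> {0..1/3}"
  hence x: "0 \<le> x" "x \<le> 1/3" by auto
  show "x \<in> closure {real (totient (p + 1)) / real (totient p) | p :: nat. prime p \<and> prime (p + 2)}"
    unfolding closure_approachable
  proof (intro allI impI)
    fix \<epsilon> :: real assume e: "\<epsilon> > 0"
    obtain M where M: "M > 0" "6 dvd M" "\<bar>real (totient M) / real M - x\<bar> < \<epsilon> / 2"
      using approx_M[OF x, of "\<epsilon> / 2"] e by auto
    obtain p where p: "prime p" "prime (p + 2)"
      "\<bar>real (totient (p + 1)) / real (totient p) - real (totient M) / real M\<bar> < \<epsilon> / 2"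
      using dickson_M[OF assms M(1,2), of "\<epsilon> / 2"] e by auto
    have "dist (real (totient (p + 1)) / real (totient p)) x < \<epsilon>"
      using M(3) p(3) unfolding dist_real_def by linarith
    thus "\<exists>y\<in>{real (totient (p + 1)) / real (totient p) | p :: nat. prime p \<and> prime (p + 2)}. dist y x < \<epsilon>"
      using p(1,2) by blast
  qed
qed

end
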